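(* For every instance of Problem (P), the output $(x_1,\dots,x_n)$ of Algorithm 1 is an optimal solution of Problem (P).
   Context: Problem (P): given an integer $n\ge1$, reals $0<q_1\le\cdots\le q_n$, $z_1,\dots,z_n>0$ and $K>0$, maximize $\sum_{i=1}^n x_i$ subject to $0\le x_i\le q_i$ for all $i$, $0\le x_1\le x_2\le\cdots\le x_n$, and $\sum_{i=1}^n z_ix_i\le K$. For $1\le i<j\le n+1$ let $\mathrm{sum}(i,j)=z_i+\cdots+z_{j-1}$ and $\mathrm{avg}(i,j)=\mathrm{sum}(i,j)/(j-i)$. Algorithm 1: Initialize $S=\{0,n+1\}$, $y_i=\mathrm{avg}(i,n+1)$ and $x_i=0$ for $i=1,\dots,n$, and $\hat B=K$. While $\hat B>0$ and $S\ne\{0,1,\dots,n+1\}$, perform an iteration: let $i^*$ be the index $i\in\{1,\dots,n\}\setminus S$ minimizing $y_i$, ties broken in favour of the smallest index; let $i_L=\max\{j\in S:j<i^*\}$ and $i_R=\min\{j\in S:j>i^*\}$; set $d=\min\{\hat B/((i_R-i^* )y_{i^*}),\ q_{i^*}-x_{i^*}\}$; set $\hat B\leftarrow\hat B-d(i_R-i^* )y_{i^*}$; set $x_i\leftarrow x_i+d$ for all $i^*\le i<i_R$; set $y_i\leftarrow\mathrm{avg}(i,i^* )$ for all $i_L<i<i^*$; add $i^*$ to $S$. When the loop ends, output $x_1,\dots,x_n$. *)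

theory Defs
  imports Complex_Main
begin

text \<open>Vectors are functions nat \<Rightarrow> real, meaningful on indices 1..n.\<close>

definition sumz :: "(nat \<Rightarrow> real) \<Rightarrow> nat \<Rightarrow> nat \<Rightarrow> real" where
  "sumz z i j = (\<Sum>k=i..<j. z k)"

definition avgz :: "(nat \<Rightarrow> real) \<Rightarrow> nat \<Rightarrow> nat \<Rightarrow> real" where
  "avgz z i j = sumz z i j / real (j - i)"

definition feasibleP ::
  "nat \<Rightarrow> (nat \<Rightarrow> real) \<Rightarrow> (nat \<Rightarrow> real) \<Rightarrow> real \<Rightarrow> (nat \<Rightarrow> real) \<Rightarrow> bool" where
  "feasibleP n q z K x \<longleftrightarrow>
     (\<forall>i\<in>{1..n}. 0 \<le> x i \<and> x i \<le> q i) \<and>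
     0 \<le> x 1 \<and> (\<forall>i j. 1 \<le> i \<longrightarrow> i \<le> j \<longrightarrow> j \<le> n \<longrightarrow> x i \<le> x j) \<and>
     (\<Sum>i=1..n. z i * x i) \<le> K"

definition optimalP ::
  "nat \<Rightarrow> (nat \<Rightarrow> real) \<Rightarrow> (nat \<Rightarrow> real) \<Rightarrow> real \<Rightarrow> (nat \<Rightarrow> real) \<Rightarrow> bool" where
  "optimalP n q z K x \<longleftrightarrow> feasibleP n q z K x \<and>
     (\<forall>x'. feasibleP n q z K x' \<longrightarrow> (\<Sum>i=1..n. x' i) \<le> (\<Sum>i=1..n. x i))"

text \<open>State of Algorithm 1: (S, y, x, B-hat).\<close>
type_synonym alg_state = "nat set \<times> (nat \<Rightarrow> real) \<times> (nat \<Rightarrow> real) \<times> real"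

definition alg_init :: "nat \<Rightarrow> (nat \<Rightarrow> real) \<Rightarrow> real \<Rightarrow> alg_state" where
  "alg_init n z K = ({0, n+1}, (\<lambda>i. avgz z i (n+1)), (\<lambda>i. 0), K)"

definition alg_step ::
  "nat \<Rightarrow> (nat \<Rightarrow> real) \<Rightarrow> (nat \<Rightarrow> real) \<Rightarrow> alg_state \<Rightarrow> alg_state" where
  "alg_step n q z st = (case st of (S, y, x, B) \<Rightarrow>
     if B > 0 \<and> S \<noteq> {0..n+1} then
       (let istar = (LEAST i. i \<in> {1..n} - S \<and> (\<forall>j\<in>{1..n} - S. y i \<le> y j));
            iL = Max {j\<in>S. j < istar};
            iR = Min {j\<in>S. istar < j};
            d = min (B / (real (iR - istar) * y istar)) (q istar - x istar)
        in (insert istar S,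
            (\<lambda>i. if iL < i \<and> i < istar then avgz z i istar else y i),
            (\<lambda>i. if istar \<le> i \<and> i < iR then x i + d else x i),
            B - d * real (iR - istar) * y istar))
     else st)"

text \<open>Each effective iteration adds a new element of {1..n} to S, so at most n iterations
  happen; after that the step is the identity. Hence n+1 applications run the loop to the end.\<close>
definition alg_output ::
  "nat \<Rightarrow> (nat \<Rightarrow> real) \<Rightarrow> (nat \<Rightarrow> real) \<Rightarrow> real \<Rightarrow> (nat \<Rightarrow> real)" where
  "alg_output n q z K = fst (snd (snd ((alg_step n q z ^^ (n+1)) (alg_init n z K))))"

end

theory Submission
  imports Defs
begin

definition nxt :: "nat set \<Rightarrow> nat \<Rightarrow> nat" where
  "nxt S i = Min {j\<in>S. i < j}"

lemma nxt_props:
  assumes "finite S" "k \<in> S" "i < k"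
  shows "nxt S i \<in> S" "i < nxt S i" "nxt S i \<le> k" "\<And>j. j \<in> S \<Longrightarrow> i < j \<Longrightarrow> nxt S i \<le> j"
proof -
  have f: "finite {j\<in>S. i < j}" using assms(1) by simp
  have ne: "{j\<in>S. i < j} \<noteq> {}" using assms by blast
  have "nxt S i \<in> {j\<in>S. i < j}" unfolding nxt_def using Min_in[OF f ne] .
  then show "nxt S i \<in> S" "i < nxt S i" by auto
  show "nxt S i \<le> k" unfolding nxt_def using assms f by (intro Min_le) auto
  show "\<And>j. j \<in> S \<Longrightarrow> i < j \<Longrightarrow> nxt S i \<le> j" unfolding nxt_def using f by (intro Min_le) auto
qed

lemma nxt_eqI:
  assumes "finite S" "k \<in> S" "i < k" "\<And>j. j \<in> S \<Longrightarrow> i < j \<Longrightarrow> k \<le> j"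
  shows "nxt S i = k"
  unfolding nxt_def using assms by (intro Min_eqI) auto

lemma nxt_insert:
  assumes "finite S" "k \<in> S" "i < k" "a \<le> i \<or> nxt S i \<le> a"
  shows "nxt (insert a S) i = nxt S i"
proof (rule nxt_eqI)
  show "finite (insert a S)" using assms by simp
  show "nxt S i \<in> insert a S" using nxt_props[OF assms(1-3)] by simp
  show "i < nxt S i" using nxt_props[OF assms(1-3)] by simp
  show "\<And>j. j \<in> insert a S \<Longrightarrow> i < j \<Longrightarrow> nxt S i \<le> j"
    using nxt_props[OF assms(1-3)] assms(4) by auto
qed

lemma sumz_split:
  assumes "a \<le> b" "b \<le> c"
  shows "sumz z a c = sumz z a b + sumz z b c"
  unfolding sumz_def using sum.atLeastLessThan_concat[OF assms, of z] by simp

lemma sumz_avg: "a < b \<Longrightarrow> sumz z a b = real (b - a) * avgz z a b"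
  unfolding avgz_def by simp

lemma avg_pos:
  assumes "1 \<le> a" "a < b" "b \<le> n + 1" "\<forall>i\<in>{1..n}. 0 < z i"
  shows "0 < avgz z a b"
proof -
  have "0 < sumz z a b" unfolding sumz_def
    using assms by (intro sum_pos) auto
  then show ?thesis unfolding avgz_def using assms by simp
qed

lemma avg_left_le:
  assumes "a < b" "b < c" "avgz z a c \<le> M" "avgz z b c = M"
  shows "avgz z a b \<le> M"
proof -
  have e: "real (c - a) * avgz z a c = real (b - a) * avgz z a b + real (c - b) * M"
    using sumz_split[of a b c z] sumz_avg[of a c z] sumz_avg[of a b z] sumz_avg[of b c z] assms by simp
  have r: "real (c - a) = real (b - a) + real (c - b)" using assms by simp
  have "real (c - a) * avgz z a c \<le> real (c - a) * M" using assms by (intro mult_left_mono) auto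
  then have "real (b - a) * avgz z a b \<le> real (b - a) * M" using e r by (simp add: algebra_simps)
  then show ?thesis using assms by simp
qed

lemma avg_left_ge:
  assumes "a < b" "b < c" "M \<le> avgz z a c" "avgz z b c = M"
  shows "M \<le> avgz z a b"
proof -
  have e: "real (c - a) * avgz z a c = real (b - a) * avgz z a b + real (c - b) * M"
    using sumz_split[of a b c z] sumz_avg[of a c z] sumz_avg[of a b z] sumz_avg[of b c z] assms by simp
  have r: "real (c - a) = real (b - a) + real (c - b)" using assms by simp
  have "real (c - a) * M \<le> real (c - a) * avgz z a c" using assms by (intro mult_left_mono) auto
  then have "real (b - a) * M \<le> real (b - a) * avgz z a b" using e r by (simp add: algebra_simps)
  then show ?thesis using assms by simp
qed

lemma block_ineq:
  fixes w xp :: "nat \<Rightarrow> real"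
  assumes "a < t" "\<forall>k. a < k \<and> k < t \<longrightarrow> 0 \<le> (\<Sum>j=k..<t. w j)"
    "\<forall>k. a \<le> k \<and> Suc k < t \<longrightarrow> xp k \<le> xp (Suc k)"
  shows "(xp a - c) * (\<Sum>j=a..<t. w j) \<le> (\<Sum>k=a..<t. w k * (xp k - c))"
  using assms
proof (induction "t - a" arbitrary: a)
  case 0
  then show ?case by simp
next
  case (Suc N)
  show ?case
  proof (cases "Suc a = t")
    case True
    then have "{a..<t} = {a}" by auto
    then show ?thesis by (simp add: algebra_simps)
  next
    case False
    then have lt: "Suc a < t" using Suc.prems by simp
    have IH: "(xp (Suc a) - c) * (\<Sum>j=Suc a..<t. w j) \<le> (\<Sum>k=Suc a..<t. w k * (xp k - c))"
      using Suc.hyps(1)[of "Suc a"] Suc.hyps(2) Suc.prems lt by auto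
    have W: "0 \<le> (\<Sum>j=Suc a..<t. w j)" using Suc.prems lt by auto
    have m: "xp a \<le> xp (Suc a)" using Suc.prems lt by auto
    have "(xp a - c) * (\<Sum>j=Suc a..<t. w j) \<le> (xp (Suc a) - c) * (\<Sum>j=Suc a..<t. w j)"
      using W m by (intro mult_right_mono) auto
    then show ?thesis using IH Suc.prems(1)
      by (simp add: sum.atLeast_Suc_lessThan algebra_simps)
  qed
qed

lemma sum_split_n:
  fixes f :: "nat \<Rightarrow> real"
  assumes "s \<le> t" "t \<le> n + 1"
  shows "(\<Sum>k=s..n. f k) = (\<Sum>k=s..<t. f k) + (\<Sum>k=t..n. f k)"
proof -
  have "(\<Sum>k=s..<Suc n. f k) = (\<Sum>k=s..<t. f k) + (\<Sum>k=t..<Suc n. f k)"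
    using sum.atLeastLessThan_concat[of s t "Suc n" f] assms by simp
  then show ?thesis by (simp add: atLeastLessThanSuc_atLeastAtMost)
qed

lemma W_eq:
  assumes "k < t" "m > 0"
  shows "(\<Sum>j=k..<t. z j / m - 1) = real (t - k) * (avgz z k t - m) / m"
proof -
  have "(\<Sum>j=k..<t. z j / m - 1) = sumz z k t / m - real (t - k)"
    unfolding sumz_def by (simp add: sum_subtractf sum_divide_distrib)
  also have "\<dots> = real (t - k) * (avgz z k t - m) / m"
    using sumz_avg[of k t z] assms by (simp add: field_simps)
  finally show ?thesis .
qed


definition inv :: "nat \<Rightarrow> (nat \<Rightarrow> real) \<Rightarrow> (nat \<Rightarrow> real) \<Rightarrow> real \<Rightarrow> nat set \<Rightarrow> (nat \<Rightarrow> real) \<Rightarrow> (nat \<Rightarrow> real) \<Rightarrow> real \<Rightarrow> bool" where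
 "inv n q z K S y x B \<longleftrightarrow>
   0 \<in> S \<and> n+1 \<in> S \<and> S \<subseteq> {0..n+1} \<and>
   (\<forall>i\<in>{1..n} - S. y i = avgz z i (nxt S i)) \<and>
   B = K - (\<Sum>i=1..n. z i * x i) \<and> 0 \<le> B \<and>
   (\<forall>i\<in>{1..n}. 0 \<le> x i \<and> x i \<le> q i) \<and>
   (\<forall>i j. 1 \<le> i \<longrightarrow> i \<le> j \<longrightarrow> j \<le> n \<longrightarrow> x i \<le> x j) \<and>
   (\<forall>i j. 1 \<le> i \<longrightarrow> i \<le> j \<longrightarrow> j \<le> n \<longrightarrow> (\<forall>k\<in>S. \<not>(i < k \<and> k \<le> j)) \<longrightarrow> x i = x j) \<and>
   (\<forall>i. 1 \<le> i \<longrightarrow> i \<le> n \<longrightarrow> (\<forall>k\<in>S. \<not>(0 < k \<and> k \<le> i)) \<longrightarrow> x i = 0) \<and>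
   (0 < B \<longrightarrow> (\<forall>s\<in>S. 1 \<le> s \<longrightarrow> s \<le> n \<longrightarrow> x s = q s)) \<and>
   (\<exists>m>0. (\<forall>s\<in>S. 1 \<le> s \<longrightarrow> s \<le> n \<longrightarrow> avgz z s (nxt S s) \<le> m \<and> (x s = q s \<or> avgz z s (nxt S s) = m)) \<and>
           (\<forall>i\<in>{1..n} - S. m \<le> y i))"

lemma init_inv:
  assumes "n \<ge> 1" "\<forall>i\<in>{1..n}. 0 < z i" "K > 0" "\<forall>i\<in>{1..n}. 0 < q i"
  shows "inv n q z K {0, n+1} (\<lambda>i. avgz z i (n+1)) (\<lambda>i. 0) K"
proof -
  have nx: "nxt {0, n+1} i = n+1" if "i \<le> n" for i
    using that by (intro nxt_eqI) auto
  define m where "m = Min ((\<lambda>i. avgz z i (n+1)) ` {1..n})"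
  have "m \<in> (\<lambda>i. avgz z i (n+1)) ` {1..n}" unfolding m_def using assms by (intro Min_in) auto
  then have mpos: "m > 0" using avg_pos[of _ "n+1" n z] assms by auto
  have mle: "\<forall>i\<in>{1..n}. m \<le> avgz z i (n+1)" unfolding m_def by auto
  show ?thesis unfolding inv_def using nx mpos mle assms by force
qed

lemma step_inv:
  assumes Aq: "\<forall>i j. 1 \<le> i \<longrightarrow> i \<le> j \<longrightarrow> j \<le> n \<longrightarrow> q i \<le> q j"
    and Az: "\<forall>i\<in>{1..n}. 0 < z i"
    and I: "inv n q z K S y x B" and Bp: "B > 0" and SN: "S \<noteq> {0..n+1}"
  shows "\<exists>S' y' x' B'. alg_step n q z (S,y,x,B) = (S',y',x',B') \<and> inv n q z K S' y' x' B' \<and> card S' = Suc (card S)"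
proof -
  from I have S0: "0 \<in> S" and Sn: "n+1 \<in> S" and Ssub: "S \<subseteq> {0..n+1}"
    and I2: "\<forall>i\<in>{1..n} - S. y i = avgz z i (nxt S i)"
    and I3: "B = K - (\<Sum>i=1..n. z i * x i)"
    and I4: "\<forall>i\<in>{1..n}. 0 \<le> x i \<and> x i \<le> q i"
    and I4m: "\<forall>i j. 1 \<le> i \<longrightarrow> i \<le> j \<longrightarrow> j \<le> n \<longrightarrow> x i \<le> x j"
    and I5: "\<forall>i j. 1 \<le> i \<longrightarrow> i \<le> j \<longrightarrow> j \<le> n \<longrightarrow> (\<forall>k\<in>S. \<not>(i < k \<and> k \<le> j)) \<longrightarrow> x i = x j"
    and I5b: "\<forall>i. 1 \<le> i \<longrightarrow> i \<le> n \<longrightarrow> (\<forall>k\<in>S. \<not>(0 < k \<and> k \<le> i)) \<longrightarrow> x i = 0"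
    and I6: "\<forall>s\<in>S. 1 \<le> s \<longrightarrow> s \<le> n \<longrightarrow> x s = q s"
    unfolding inv_def using Bp by auto
  from I obtain m where mpos: "m > 0"
    and I7a: "\<forall>s\<in>S. 1 \<le> s \<longrightarrow> s \<le> n \<longrightarrow> avgz z s (nxt S s) \<le> m \<and> (x s = q s \<or> avgz z s (nxt S s) = m)"
    and I7b: "\<forall>i\<in>{1..n} - S. m \<le> y i"
    unfolding inv_def by blast
  have finS: "finite S" using Ssub finite_subset by blast
  define U where "U = {1..n} - S"
  have Une: "U \<noteq> {}"
  proof
    assume "U = {}"
    then have "{1..n} \<subseteq> S" unfolding U_def by auto
    have "{0..n+1} \<subseteq> S"
    proof
      fix k assume "k \<in> {0..n+1}"
      then have "k = 0 \<or> k \<in> {1..n} \<or> k = n+1" by auto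
      then show "k \<in> S" using S0 Sn \<open>{1..n} \<subseteq> S\<close> by blast
    qed
    then show False using SN Ssub by auto
  qed
  have finU: "finite U" unfolding U_def by simp
  have "Min (y ` U) \<in> y ` U" using finU Une by (intro Min_in) auto
  then obtain i0 where i0: "i0 \<in> U" "y i0 = Min (y ` U)" by auto
  have i0min: "\<forall>j\<in>U. y i0 \<le> y j" using i0 finU by auto
  define ist where "ist = (LEAST i. i \<in> {1..n} - S \<and> (\<forall>j\<in>{1..n} - S. y i \<le> y j))"
  have P0: "i0 \<in> {1..n} - S \<and> (\<forall>j\<in>{1..n} - S. y i0 \<le> y j)" using i0 i0min U_def by auto
  have istP: "ist \<in> {1..n} - S \<and> (\<forall>j\<in>{1..n} - S. y ist \<le> y j)"
    unfolding ist_def by (rule LeastI[where P="\<lambda>i. i \<in> {1..n} - S \<and> (\<forall>j\<in>{1..n} - S. y i \<le> y j)", OF P0])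
  then have ist1: "1 \<le> ist" "ist \<le> n" "ist \<notin> S" and istmin: "\<forall>j\<in>{1..n} - S. y ist \<le> y j" by auto
  define iL where "iL = Max {j\<in>S. j < ist}"
  define iR where "iR = Min {j\<in>S. ist < j}"
  have fL: "finite {j\<in>S. j < ist}" using finS by simp
  have "iL \<in> {j\<in>S. j < ist}" unfolding iL_def using fL S0 ist1 by (intro Max_in) auto
  then have iLS: "iL \<in> S" and iLlt: "iL < ist" by auto
  have iLmax: "\<And>j. j \<in> S \<Longrightarrow> j < ist \<Longrightarrow> j \<le> iL" unfolding iL_def using fL by (intro Max_ge) auto
  have iRn: "iR = nxt S ist" unfolding iR_def nxt_def by simp
  have istn1: "ist < n+1" using ist1 by simp
  note nR = nxt_props[OF finS Sn istn1, folded iRn]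
  have iRS: "iR \<in> S" and iRgt: "ist < iR" and iRle: "iR \<le> n+1" and iRmin: "\<And>j. j \<in> S \<Longrightarrow> ist < j \<Longrightarrow> iR \<le> j"
    using nR by auto
  have noS: "\<And>j. j \<in> S \<Longrightarrow> iL < j \<Longrightarrow> iR \<le> j"
  proof -
    fix j assume "j \<in> S" "iL < j"
    then have "\<not> j < ist" using iLmax by force
    moreover have "j \<noteq> ist" using \<open>j \<in> S\<close> ist1 by auto
    ultimately show "iR \<le> j" using iRmin \<open>j \<in> S\<close> by simp
  qed
  have yis: "y ist = avgz z ist iR" using I2 ist1 iRn by simp
  have ypos: "y ist > 0" using yis avg_pos[of ist iR n z] ist1 iRgt iRle Az by simp
  define L where "L = real (iR - ist)"
  have Lpos: "L > 0" unfolding L_def using iRgt by simp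
  define d where "d = min (B / (real (iR - ist) * y ist)) (q ist - x ist)"
  define S' where "S' = insert ist S"
  define y' where "y' = (\<lambda>i. if iL < i \<and> i < ist then avgz z i ist else y i)"
  define x' where "x' = (\<lambda>i. if ist \<le> i \<and> i < iR then x i + d else x i)"
  define B' where "B' = B - d * real (iR - ist) * y ist"
  have eq: "alg_step n q z (S,y,x,B) = (S',y',x',B')"
  proof -
    have cond: "B > 0 \<and> S \<noteq> {0..n+1}" using Bp SN by simp
    show ?thesis
      unfolding alg_step_def prod.case Let_def if_P[OF cond] ist_def[symmetric]
      unfolding iL_def[symmetric] iR_def[symmetric]
      unfolding d_def[symmetric]
      unfolding S'_def y'_def x'_def B'_def by (rule refl)
  qed
  have xblk: "\<And>i. ist \<le> i \<Longrightarrow> i < iR \<Longrightarrow> x i = x ist"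
  proof -
    fix i assume "ist \<le> i" "i < iR"
    have "\<forall>k\<in>S. \<not>(ist < k \<and> k \<le> i)" using iRmin \<open>i < iR\<close> by force
    moreover have "i \<le> n" using \<open>i < iR\<close> iRle by simp
    ultimately have "x ist = x i" using I5 ist1 \<open>ist \<le> i\<close> by blast
    then show "x i = x ist" by simp
  qed
  have d1: "d \<le> B / (L * y ist)" unfolding d_def L_def by simp
  have d2: "d \<le> q ist - x ist" unfolding d_def by simp
  have d0: "0 \<le> d" unfolding d_def using Bp Lpos ypos I4 ist1 L_def by auto
  have Lyp: "L * y ist > 0" using Lpos ypos by simp
  have B'0: "0 \<le> B'"
  proof -
    have "d * (L * y ist) \<le> B" using d1 Lyp by (simp add: pos_le_divide_eq)
    then show ?thesis unfolding B'_def L_def by (simp add: algebra_simps)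
  qed
  have costs: "(\<Sum>i=1..n. z i * x' i) = (\<Sum>i=1..n. z i * x i) + d * sumz z ist iR"
  proof -
    have "(\<Sum>i=1..n. z i * x' i) = (\<Sum>i=1..n. z i * x i + (if ist \<le> i \<and> i < iR then d * z i else 0))"
      unfolding x'_def by (intro sum.cong) (auto simp: algebra_simps)
    also have "\<dots> = (\<Sum>i=1..n. z i * x i) + (\<Sum>i\<in>{1..n} \<inter> {i. ist \<le> i \<and> i < iR}. d * z i)"
      using sum.inter_restrict[of "{1..n}" "\<lambda>i. d * z i" "{i. ist \<le> i \<and> i < iR}"] by (simp add: sum.distrib)
    also have "{1..n} \<inter> {i. ist \<le> i \<and> i < iR} = {ist..<iR}" using ist1 iRle by auto
    finally show ?thesis unfolding sumz_def by (simp add: sum_distrib_left)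
  qed
  have B'eq: "B' = K - (\<Sum>i=1..n. z i * x' i)"
  proof -
    have "real (iR - ist) * y ist = sumz z ist iR" using sumz_avg[of ist iR z] iRgt yis by simp
    then have "B' = B - d * sumz z ist iR" unfolding B'_def by (simp add: mult.assoc)
    then show ?thesis using costs I3 by simp
  qed
  have feas: "\<forall>i\<in>{1..n}. 0 \<le> x' i \<and> x' i \<le> q i"
  proof
    fix i assume i: "i \<in> {1..n}"
    show "0 \<le> x' i \<and> x' i \<le> q i"
    proof (cases "ist \<le> i \<and> i < iR")
      case True
      then have "x' i = x ist + d" unfolding x'_def using xblk[of i] by simp
      moreover have "q ist \<le> q i" using Aq[rule_format, of ist i] ist1 True i by simp
      moreover have "0 \<le> x ist" using I4 ist1 by auto
      ultimately show ?thesis using d0 d2 by linarith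
    next
      case False
      then have "x' i = x i" unfolding x'_def by (rule if_not_P)
      then show ?thesis using I4 i by simp
    qed
  qed
  have mono: "\<forall>i j. 1 \<le> i \<longrightarrow> i \<le> j \<longrightarrow> j \<le> n \<longrightarrow> x' i \<le> x' j"
  proof (intro allI impI)
    fix i j assume ij: "1 \<le> i" "i \<le> j" "j \<le> n"
    have xij: "x i \<le> x j" using I4m[rule_format, of i j] ij by simp
    show "x' i \<le> x' j"
    proof (cases "ist \<le> i \<and> i < iR")
      case True
      show ?thesis
      proof (cases "j < iR")
        case True2: True
        then show ?thesis using True ij xij unfolding x'_def by auto
      next
        case False
        then have jR: "iR \<le> j" by simp
        have "x' i = x ist + d" unfolding x'_def using xblk[of i] True by simp
        also have "\<dots> \<le> q ist" using d2 by simp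
        also have "\<dots> \<le> q iR" using Aq[rule_format, of ist iR] ist1 iRgt jR ij by simp
        also have "q iR = x iR" using I6 iRS iRgt jR ij ist1 by auto
        also have "x iR \<le> x j" using I4m[rule_format, of iR j] jR ij iRgt ist1 by simp
        also have "x j = x' j" unfolding x'_def using jR by simp
        finally show ?thesis .
      qed
    next
      case False
      then show ?thesis using xij d0 ij unfolding x'_def by auto
    qed
  qed
  have blk: "\<forall>i j. 1 \<le> i \<longrightarrow> i \<le> j \<longrightarrow> j \<le> n \<longrightarrow> (\<forall>k\<in>S'. \<not>(i < k \<and> k \<le> j)) \<longrightarrow> x' i = x' j"
  proof (intro allI impI)
    fix i j assume ij: "1 \<le> i" "i \<le> j" "j \<le> n" and nk: "\<forall>k\<in>S'. \<not>(i < k \<and> k \<le> j)"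
    then have "x i = x j" using I5[rule_format, of i j] ij unfolding S'_def by blast
    moreover have "(ist \<le> i \<and> i < iR) = (ist \<le> j \<and> j < iR)"
      using nk iRS ij unfolding S'_def by auto
    ultimately show "x' i = x' j" unfolding x'_def by auto
  qed
  have zer: "\<forall>i. 1 \<le> i \<longrightarrow> i \<le> n \<longrightarrow> (\<forall>k\<in>S'. \<not>(0 < k \<and> k \<le> i)) \<longrightarrow> x' i = 0"
  proof (intro allI impI)
    fix i assume i: "1 \<le> i" "i \<le> n" and nk: "\<forall>k\<in>S'. \<not>(0 < k \<and> k \<le> i)"
    then have "i < ist" using ist1 unfolding S'_def by auto
    moreover have "x i = 0" using I5b[rule_format, of i] i nk unfolding S'_def by blast
    ultimately show "x' i = 0" unfolding x'_def by simp
  qed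
  have capped: "0 < B' \<longrightarrow> (\<forall>s\<in>S'. 1 \<le> s \<longrightarrow> s \<le> n \<longrightarrow> x' s = q s)"
  proof (intro impI ballI)
    assume B'p: "0 < B'"
    have "d \<noteq> B / (L * y ist)"
    proof
      assume "d = B / (L * y ist)"
      then have "d * (L * y ist) = B" using ypos Lpos by simp
      then have "B' = 0" unfolding B'_def L_def[symmetric] by (simp add: mult.assoc)
      then show False using B'p by simp
    qed
    then have dq: "d = q ist - x ist" unfolding d_def L_def by (auto simp: min_def)
    fix s assume s: "s \<in> S'" "1 \<le> s" "s \<le> n"
    show "x' s = q s"
    proof (cases "s = ist")
      case True
      then show ?thesis using dq iRgt unfolding x'_def by simp
    next
      case False
      then have "s \<in> S" using s(1) unfolding S'_def by simp
      then have "\<not>(ist \<le> s \<and> s < iR)" using iRmin False by force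
      then have "x' s = x s" unfolding x'_def by (rule if_not_P)
      then show ?thesis using I6 \<open>s \<in> S\<close> s by simp
    qed
  qed
  have finS': "finite S'" unfolding S'_def using finS by simp
  have nxtS'_is: "nxt S' ist = iR"
    using iRS iRgt iRmin finS' unfolding S'_def by (intro nxt_eqI) auto
  have nxtS'_mid: "nxt S' i = ist" if "iL < i" "i < ist" for i
    using finS' that noS iRgt unfolding S'_def by (intro nxt_eqI) force+
  have nxtS_mid: "nxt S i = iR" if "iL < i" "i < ist" for i
    using finS that noS iRS iRgt by (intro nxt_eqI) force+
  have nxtS'_other: "nxt S' i = nxt S i" if "i \<le> n" "\<not>(iL < i \<and> i < ist)" "i \<noteq> iL" for i
  proof -
    have "i < n+1" using that by simp
    note np = nxt_props[OF finS Sn this]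
    have "ist \<le> i \<or> nxt S i \<le> ist"
    proof (cases "ist \<le> i")
      case False
      then have "i < iL" using that by simp
      then have "nxt S i \<le> iL" using np iLS by simp
      then show ?thesis using iLlt by simp
    qed simp
    then show ?thesis unfolding S'_def using nxt_insert[OF finS Sn \<open>i < n+1\<close>] by simp
  qed
  have y'_mid: "y' i = avgz z i ist" if "iL < i" "i < ist" for i
    unfolding y'_def using that by simp
  have y'_out: "y' i = y i" if "\<not>(iL < i \<and> i < ist)" for i
    unfolding y'_def using that by (rule if_not_P)
  have Iy: "\<forall>i\<in>{1..n} - S'. y' i = avgz z i (nxt S' i)"
  proof
    fix i assume i: "i \<in> {1..n} - S'"
    then have iS: "i \<notin> S" "i \<noteq> ist" unfolding S'_def by auto
    show "y' i = avgz z i (nxt S' i)"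
    proof (cases "iL < i \<and> i < ist")
      case True
      then show ?thesis using y'_mid nxtS'_mid by simp
    next
      case False
      moreover have "i \<noteq> iL" using iS iLS by auto
      ultimately show ?thesis using y'_out nxtS'_other I2 i iS by simp
    qed
  qed
  have istU: "ist \<in> {1..n} - S" using istP by blast
  have mle: "m \<le> y ist" using I7b istU by blast
  have Ima: "avgz z s (nxt S' s) \<le> y ist \<and> (x' s = q s \<or> avgz z s (nxt S' s) = y ist)"
    if s: "s \<in> S'" "1 \<le> s" "s \<le> n" for s
  proof (cases "s = ist")
    case True
    then show ?thesis using nxtS'_is yis by simp
  next
    case False
    then have sS: "s \<in> S" using s(1) unfolding S'_def by simp
    have "\<not> ist < s \<or> iR \<le> s" using iRmin[OF sS] by blast
    then have "\<not>(ist \<le> s \<and> s < iR)" using False by linarith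
    then have xs: "x' s = x s" unfolding x'_def by (rule if_not_P)
    have xq: "x s = q s" using I6 sS s(2,3) by blast
    have I7s: "avgz z s (nxt S s) \<le> m" using I7a sS s(2,3) by blast
    show ?thesis
    proof (cases "s = iL")
      case True
      have n1: "nxt S' s = ist" unfolding True S'_def
      proof (rule nxt_eqI)
        show "finite (insert ist S)" using finS by simp
      next
        fix j assume "j \<in> insert ist S" "iL < j"
        then show "ist \<le> j" using noS iRgt by fastforce
      qed (use iLlt in auto)
      have n2: "nxt S s = iR" unfolding True
      proof (rule nxt_eqI)
        fix j assume "j \<in> S" "iL < j"
        then show "iR \<le> j" using noS by blast
      qed (use finS iRS iLlt iRgt in auto)
      have "avgz z s (nxt S s) \<le> y ist" using I7s mle by linarith
      then have a1: "avgz z s iR \<le> y ist" unfolding n2 .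
      have sl: "s < ist" using True iLlt by simp
      have "avgz z s ist \<le> y ist"
        using avg_left_le[OF sl iRgt a1 yis[symmetric]] .
      then have "avgz z s (nxt S' s) \<le> y ist" unfolding n1 .
      moreover have "x' s = q s" using xs xq by simp
      ultimately show ?thesis by blast
    next
      case False
      have "\<not> s < ist \<or> s \<le> iL" using iLmax[OF sS] by blast
      then have c: "\<not>(iL < s \<and> s < ist)" using False by linarith
      have "nxt S' s = nxt S s" by (rule nxtS'_other) (use c s False in auto)
      then show ?thesis using I7s mle xs xq by simp
    qed
  qed
  have Imb: "y ist \<le> y' i" if i: "i \<in> {1..n} - S'" for i
  proof -
    have iS: "i \<notin> S" "i \<noteq> ist" using i unfolding S'_def by auto
    have iU: "i \<in> {1..n} - S" using i iS by simp
    have yi: "y ist \<le> y i" using istmin iU by blast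
    show "y ist \<le> y' i"
    proof (cases "iL < i \<and> i < ist")
      case True
      have "y i = avgz z i (nxt S i)" using I2 iU by blast
      also have "nxt S i = iR" using nxtS_mid True by blast
      finally have yi2: "y i = avgz z i iR" .
      have "y ist \<le> avgz z i ist"
        by (rule avg_left_ge[of i ist iR "y ist" z]) (use True iRgt yi yi2 yis in auto)
      moreover have "y' i = avgz z i ist" using y'_mid True by blast
      ultimately show ?thesis by simp
    next
      case False
      then have "y' i = y i" by (rule y'_out)
      then show ?thesis using yi by simp
    qed
  qed
  have Im: "\<exists>m>0. (\<forall>s\<in>S'. 1 \<le> s \<longrightarrow> s \<le> n \<longrightarrow> avgz z s (nxt S' s) \<le> m \<and> (x' s = q s \<or> avgz z s (nxt S' s) = m)) \<and>
           (\<forall>i\<in>{1..n} - S'. m \<le> y' i)"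
    using ypos Ima Imb by blast
  have inv': "inv n q z K S' y' x' B'"
    unfolding inv_def
  proof (intro conjI)
    show "0 \<in> S'" "n+1 \<in> S'" using S0 Sn unfolding S'_def by auto
    show "S' \<subseteq> {0..n+1}" using Ssub ist1 unfolding S'_def by auto
  qed (fact Iy B'eq B'0 feas mono blk zer capped Im)+
  have "card S' = Suc (card S)" unfolding S'_def using finS ist1 by simp
  then show ?thesis using eq inv' by blast
qed


lemma dual:
  assumes I: "inv n q z K S y x B" and mpos: "m > 0"
    and I7a: "\<forall>s\<in>S. 1 \<le> s \<longrightarrow> s \<le> n \<longrightarrow> avgz z s (nxt S s) \<le> m \<and> (x s = q s \<or> avgz z s (nxt S s) = m)"
    and I7b: "\<forall>i\<in>{1..n} - S. m \<le> y i"
    and F: "feasibleP n q z K xp"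
  shows "0 \<le> (\<Sum>k=1..n. (z k / m - 1) * (xp k - x k))"
proof -
  from I have S0: "0 \<in> S" and Sn: "n+1 \<in> S" and Ssub: "S \<subseteq> {0..n+1}"
    and I2: "\<forall>i\<in>{1..n} - S. y i = avgz z i (nxt S i)"
    and I5: "\<forall>i j. 1 \<le> i \<longrightarrow> i \<le> j \<longrightarrow> j \<le> n \<longrightarrow> (\<forall>k\<in>S. \<not>(i < k \<and> k \<le> j)) \<longrightarrow> x i = x j"
    and I5b: "\<forall>i. 1 \<le> i \<longrightarrow> i \<le> n \<longrightarrow> (\<forall>k\<in>S. \<not>(0 < k \<and> k \<le> i)) \<longrightarrow> x i = 0"
    unfolding inv_def by auto
  from F have Fq: "\<forall>i\<in>{1..n}. 0 \<le> xp i \<and> xp i \<le> q i"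
    and Fm: "\<forall>i j. 1 \<le> i \<longrightarrow> i \<le> j \<longrightarrow> j \<le> n \<longrightarrow> xp i \<le> xp j"
    unfolding feasibleP_def by auto
  have finS: "finite S" using Ssub finite_subset by blast
  define w where "w k = z k / m - 1" for k
  have Wk: "0 \<le> (\<Sum>j=k..<t. w j)" if k: "k \<notin> S" "1 \<le> k" "k \<le> n" "nxt S k = t" for k t
  proof -
    have kt: "k < t" using nxt_props(2)[OF finS Sn, of k] k by simp
    have "y k = avgz z k t" using I2 k by simp
    moreover have "m \<le> y k" using I7b k by simp
    ultimately have "0 \<le> avgz z k t - m" by simp
    then have "0 \<le> real (t - k) * (avgz z k t - m) / m" using mpos by simp
    then show ?thesis unfolding w_def using W_eq[OF kt mpos, of z] by simp
  qed
  have blockp: "0 \<le> (\<Sum>k=s..<nxt S s. w k * (xp k - x k))" if s: "s \<in> S" "1 \<le> s" "s \<le> n" for s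
  proof -
    define t where "t = nxt S s"
    have sn1: "s < n+1" using s by simp
    note np = nxt_props[OF finS Sn sn1, folded t_def]
    have tS: "t \<in> S" and st: "s < t" and tle: "t \<le> n+1" and tmin: "\<And>j. j \<in> S \<Longrightarrow> s < j \<Longrightarrow> t \<le> j"
      using np by auto
    have xk: "x k = x s" if "s \<le> k" "k < t" for k
    proof -
      have "\<forall>j\<in>S. \<not>(s < j \<and> j \<le> k)" using tmin that by force
      moreover have "k \<le> n" using that tle by simp
      ultimately have "x s = x k" using I5 s(2) that(1) by blast
      then show ?thesis by simp
    qed
    have "(\<Sum>k=s..<t. w k * (xp k - x k)) = (\<Sum>k=s..<t. w k * (xp k - x s))"
    proof (rule sum.cong[OF refl])
      fix k assume "k \<in> {s..<t}"
      then have "x k = x s" by (intro xk) auto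
      then show "w k * (xp k - x k) = w k * (xp k - x s)" by simp
    qed
    moreover have "(xp s - x s) * (\<Sum>j=s..<t. w j) \<le> (\<Sum>k=s..<t. w k * (xp k - x s))"
    proof (rule block_ineq[OF st])
      show "\<forall>k. s < k \<and> k < t \<longrightarrow> 0 \<le> (\<Sum>j=k..<t. w j)"
      proof (intro allI impI)
        fix k assume k: "s < k \<and> k < t"
        have kS: "k \<notin> S" using tmin k by force
        have "nxt S k = t"
        proof (rule nxt_eqI[OF finS tS])
          show "k < t" using k by simp
          fix j assume "j \<in> S" "k < j"
          then show "t \<le> j" using tmin k by simp
        qed
        then show "0 \<le> (\<Sum>j=k..<t. w j)" using Wk[of k t] kS k s tle by simp
      qed
      show "\<forall>k. s \<le> k \<and> Suc k < t \<longrightarrow> xp k \<le> xp (Suc k)"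
        using Fm s tle by auto
    qed
    moreover have "0 \<le> (xp s - x s) * (\<Sum>j=s..<t. w j)"
    proof -
      have Weq: "(\<Sum>j=s..<t. w j) = real (t - s) * (avgz z s t - m) / m"
        unfolding w_def using W_eq[OF st mpos, of z] by simp
      have c: "avgz z s t \<le> m" "x s = q s \<or> avgz z s t = m" using I7a s t_def by auto
      show ?thesis
      proof (cases "avgz z s t = m")
        case True
        then show ?thesis using Weq by simp
      next
        case False
        then have "x s = q s" using c by simp
        then have "xp s - x s \<le> 0" using Fq s by auto
        moreover have "(\<Sum>j=s..<t. w j) \<le> 0" using Weq c(1) mpos
          by (simp add: divide_nonpos_pos mult_nonneg_nonpos)
        ultimately show ?thesis by (simp add: mult_nonpos_nonpos)
      qed
    qed
    ultimately show ?thesis unfolding t_def by linarith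
  qed
  have tail: "\<forall>s. n + 1 - s \<le> N \<longrightarrow> s \<in> S \<longrightarrow> 1 \<le> s \<longrightarrow> s \<le> n \<longrightarrow> 0 \<le> (\<Sum>k=s..n. w k * (xp k - x k))" for N
  proof (induction N)
    case 0
    then show ?case by auto
  next
    case (Suc N)
    show ?case
    proof (intro allI impI)
      fix s assume s: "n + 1 - s \<le> Suc N" "s \<in> S" "1 \<le> s" "s \<le> n"
      define t where "t = nxt S s"
      have sn1: "s < n+1" using s by simp
      note np = nxt_props[OF finS Sn sn1, folded t_def]
      have tS: "t \<in> S" and st: "s < t" and tle: "t \<le> n+1" using np by auto
      have split: "(\<Sum>k=s..n. w k * (xp k - x k)) = (\<Sum>k=s..<t. w k * (xp k - x k)) + (\<Sum>k=t..n. w k * (xp k - x k))"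
        using sum_split_n[of s t n] st tle by simp
      have b: "0 \<le> (\<Sum>k=s..<t. w k * (xp k - x k))" using blockp s unfolding t_def by simp
      have r: "0 \<le> (\<Sum>k=t..n. w k * (xp k - x k))"
      proof (cases "t = n+1")
        case True
        then show ?thesis by simp
      next
        case False
        then have "t \<le> n" using tle by simp
        moreover have "n + 1 - t \<le> N" using s st by simp
        ultimately show ?thesis using Suc.IH tS st by simp
      qed
      show "0 \<le> (\<Sum>k=s..n. w k * (xp k - x k))" using split b r by simp
    qed
  qed
  define t where "t = nxt S 0"
  have z1: "0 < n+1" by simp
  note np = nxt_props[OF finS Sn z1, folded t_def]
  have tS: "t \<in> S" and t0: "0 < t" and tle: "t \<le> n+1" and tmin: "\<And>j. j \<in> S \<Longrightarrow> 0 < j \<Longrightarrow> t \<le> j"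
    using np by auto
  have split: "(\<Sum>k=1..n. w k * (xp k - x k)) = (\<Sum>k=1..<t. w k * (xp k - x k)) + (\<Sum>k=t..n. w k * (xp k - x k))"
    using sum_split_n[of 1 t n] t0 tle by simp
  have r: "0 \<le> (\<Sum>k=t..n. w k * (xp k - x k))"
  proof (cases "t = n+1")
    case True
    then show ?thesis by simp
  next
    case False
    then have "t \<le> n" using tle by simp
    then show ?thesis using tail[of "n + 1 - t"] tS t0 by simp
  qed
  have b: "0 \<le> (\<Sum>k=1..<t. w k * (xp k - x k))"
  proof (cases "t = 1")
    case True
    then show ?thesis by simp
  next
    case False
    then have t1: "1 < t" using t0 by simp
    have xk: "x k = 0" if "1 \<le> k" "k < t" for k
    proof -
      have "\<forall>j\<in>S. \<not>(0 < j \<and> j \<le> k)" using tmin that by force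
      moreover have "k \<le> n" using that tle by simp
      ultimately show ?thesis using I5b that(1) by blast
    qed
    have W: "0 \<le> (\<Sum>j=k..<t. w j)" if "1 \<le> k" "k < t" for k
    proof -
      have kS: "k \<notin> S" using tmin that by force
      have "nxt S k = t"
      proof (rule nxt_eqI[OF finS tS])
        show "k < t" using that by simp
        fix j assume "j \<in> S" "k < j"
        then show "t \<le> j" using tmin that by simp
      qed
      then show ?thesis using Wk[of k t] kS that tle by simp
    qed
    have "(\<Sum>k=1..<t. w k * (xp k - x k)) = (\<Sum>k=1..<t. w k * (xp k - 0))"
      by (rule sum.cong) (simp_all add: xk)
    moreover have "(xp 1 - 0) * (\<Sum>j=1..<t. w j) \<le> (\<Sum>k=1..<t. w k * (xp k - 0))"
    proof (rule block_ineq[OF t1])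
      show "\<forall>k. 1 < k \<and> k < t \<longrightarrow> 0 \<le> (\<Sum>j=k..<t. w j)" using W by simp
      show "\<forall>k. 1 \<le> k \<and> Suc k < t \<longrightarrow> xp k \<le> xp (Suc k)" using Fm tle by auto
    qed
    moreover have "0 \<le> xp 1" using Fq t1 tle by auto
    moreover have "0 \<le> (\<Sum>j=1..<t. w j)" using W t1 by simp
    ultimately show ?thesis by (metis mult_nonneg_nonneg order_trans diff_zero)
  qed
  show ?thesis using split b r unfolding w_def by simp
qed

lemma iter:
  assumes n1: "n \<ge> 1" and Aqp: "\<forall>i\<in>{1..n}. 0 < q i"
    and Aq: "\<forall>i j. 1 \<le> i \<longrightarrow> i \<le> j \<longrightarrow> j \<le> n \<longrightarrow> q i \<le> q j"
    and Az: "\<forall>i\<in>{1..n}. 0 < z i" and K: "K > 0"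
  shows "\<exists>S y x B. (alg_step n q z ^^ k) (alg_init n z K) = (S,y,x,B) \<and> inv n q z K S y x B \<and>
           (\<not>(B > 0 \<and> S \<noteq> {0..n+1}) \<or> k + 2 \<le> card S)"
proof (induction k)
  case 0
  have "card {0::nat, n+1} = 2" by simp
  then show ?case using init_inv[OF n1 Az K Aqp] unfolding alg_init_def by auto
next
  case (Suc k)
  then obtain S y x B where st: "(alg_step n q z ^^ k) (alg_init n z K) = (S,y,x,B)"
    and I: "inv n q z K S y x B" and c: "\<not>(B > 0 \<and> S \<noteq> {0..n+1}) \<or> k + 2 \<le> card S" by blast
  have st': "(alg_step n q z ^^ Suc k) (alg_init n z K) = alg_step n q z (S,y,x,B)" using st by simp
  show ?case
  proof (cases "B > 0 \<and> S \<noteq> {0..n+1}")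
    case True
    then obtain S' y' x' B' where "alg_step n q z (S,y,x,B) = (S',y',x',B')" "inv n q z K S' y' x' B'"
      "card S' = Suc (card S)" using step_inv[OF Aq Az I] by blast
    then show ?thesis using st' c True by auto
  next
    case False
    then have "alg_step n q z (S,y,x,B) = (S,y,x,B)" unfolding alg_step_def by auto
    then show ?thesis using st' I False by auto
  qed
qed

theorem theorem3:
  fixes n :: nat and q z :: "nat \<Rightarrow> real" and K :: real
  assumes "n \<ge> 1"
    and "\<forall>i\<in>{1..n}. 0 < q i"
    and "\<forall>i j. 1 \<le> i \<longrightarrow> i \<le> j \<longrightarrow> j \<le> n \<longrightarrow> q i \<le> q j"
    and "\<forall>i\<in>{1..n}. 0 < z i"
    and "K > 0"
  shows "optimalP n q z K (alg_output n q z K)"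
proof -
  obtain S y x B where st: "(alg_step n q z ^^ (n+1)) (alg_init n z K) = (S,y,x,B)"
    and I: "inv n q z K S y x B" and c: "\<not>(B > 0 \<and> S \<noteq> {0..n+1}) \<or> n + 1 + 2 \<le> card S"
    using iter[OF assms, of "n+1"] by blast
  have out: "alg_output n q z K = x" unfolding alg_output_def st by simp
  from I have Ssub: "S \<subseteq> {0..n+1}" unfolding inv_def by simp
  have "card S \<le> card {0..n+1}" using Ssub by (intro card_mono) auto
  then have "card S \<le> n + 2" by simp
  then have stop: "\<not>(B > 0 \<and> S \<noteq> {0..n+1})" using c by linarith
  from I have I3: "B = K - (\<Sum>i=1..n. z i * x i)" and B0: "0 \<le> B"
    and I4: "\<forall>i\<in>{1..n}. 0 \<le> x i \<and> x i \<le> q i"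
    and I4m: "\<forall>i j. 1 \<le> i \<longrightarrow> i \<le> j \<longrightarrow> j \<le> n \<longrightarrow> x i \<le> x j"
    and I6: "0 < B \<longrightarrow> (\<forall>s\<in>S. 1 \<le> s \<longrightarrow> s \<le> n \<longrightarrow> x s = q s)"
    unfolding inv_def by auto
  have feas: "feasibleP n q z K x"
    unfolding feasibleP_def using I4 I4m I3 B0 assms(1) by auto
  have opt: "(\<Sum>i=1..n. xp i) \<le> (\<Sum>i=1..n. x i)" if F: "feasibleP n q z K xp" for xp
  proof (cases "B > 0")
    case True
    then have "S = {0..n+1}" using stop by simp
    then have "\<forall>i\<in>{1..n}. x i = q i" using I6 True by auto
    moreover have "\<forall>i\<in>{1..n}. xp i \<le> q i" using F unfolding feasibleP_def by auto
    ultimately show ?thesis by (intro sum_mono) auto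
  next
    case False
    then have Kx: "(\<Sum>i=1..n. z i * x i) = K" using B0 I3 by simp
    have Kxp: "(\<Sum>i=1..n. z i * xp i) \<le> K" using F unfolding feasibleP_def by simp
    from I obtain m where mpos: "m > 0"
      and I7a: "\<forall>s\<in>S. 1 \<le> s \<longrightarrow> s \<le> n \<longrightarrow> avgz z s (nxt S s) \<le> m \<and> (x s = q s \<or> avgz z s (nxt S s) = m)"
      and I7b: "\<forall>i\<in>{1..n} - S. m \<le> y i"
      unfolding inv_def by blast
    have d: "0 \<le> (\<Sum>k=1..n. (z k / m - 1) * (xp k - x k))" by (rule dual[OF I mpos I7a I7b F])
    have "(\<Sum>k=1..n. (z k / m - 1) * (xp k - x k))
        = ((\<Sum>k=1..n. z k * xp k) - (\<Sum>k=1..n. z k * x k)) / m - ((\<Sum>k=1..n. xp k) - (\<Sum>k=1..n. x k))"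
    proof -
      have "(\<Sum>k=1..n. (z k / m - 1) * (xp k - x k)) = (\<Sum>k=1..n. (z k * xp k - z k * x k) / m - (xp k - x k))"
        by (rule sum.cong) (simp_all add: field_simps)
      also have "\<dots> = ((\<Sum>k=1..n. z k * xp k) - (\<Sum>k=1..n. z k * x k)) / m - ((\<Sum>k=1..n. xp k) - (\<Sum>k=1..n. x k))"
        by (simp add: sum_subtractf sum_divide_distrib[symmetric])
      finally show ?thesis .
    qed
    moreover have "((\<Sum>k=1..n. z k * xp k) - (\<Sum>k=1..n. z k * x k)) / m \<le> 0"
      using Kx Kxp mpos by (simp add: divide_nonpos_pos)
    ultimately show ?thesis using d by linarith
  qed
  show ?thesis unfolding optimalP_def out using feas opt by blast
qed

end
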